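(* Let $X$ be a real Hilbert space and $A,B$ nonempty closed convex subsets of $X$, and let $v$ be the displacement vector of $(A,B)$. Suppose there exist $e\in A\cap(B-v)$ and a continuous linear functional $x^*\in X^*$ with $\|x^*\|=1$ such that $$\inf x^*(B-v)=x^*(e)=\sup x^*(A)$$ and such that $x^*$ strongly exposes $A$ at $e$. Then the couple $(A,B)$ is stable.
   Context: $P_C$ is the metric projection onto a closed convex nonempty set $C$; $B_X$ the closed unit ball; $\mathrm{dist}(x,S)=\inf_{s\in S}\|x-s\|$, $\mathrm{dist}(S,T)=\inf_{s\in S}\mathrm{dist}(s,T)$. $v=P_{\overline{B-A}}(0)$. $E=\{a\in A:\mathrm{dist}(a,B)=\mathrm{dist}(A,B)\}$, $F=\{b\in B:\mathrm{dist}(b,A)=\mathrm{dist}(A,B)\}$. A functional $f\in X^*\setminus\{0\}$ strongly exposes $A$ at $a\in A$ if $f(a)=\sup f(A)$ and every sequence $\{x_n\}\subset A$ with $f(x_n)\to\sup f(A)$ converges in norm to $a$. Attouch–Wets convergence: for nonempty closed $C,D$ and $N\in\mathbb N$ let $e_N(C,D)=\sup_{c\in C\cap NB_X}\mathrm{dist}(c,D)$ ($0$ if $C\cap NB_X=\emptyset$), $h_N(C,D)=\max\{e_N(C,D),e_N(D,C)\}$; $C_j\to C$ if $h_N(C_j,C)\to0$ for every $N$. Given sequences $\{A_n\},\{B_n\}$ of closed convex nonempty sets and $a_0\in X$, the perturbed alternating projections sequences are $b_n=P_{B_n}(a_{n-1})$, $a_n=P_{A_n}(b_n)$ ($n\in\mathbb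 N$). The couple $(A,B)$ (with $E,F$ nonempty) is stable if for every choice of sequences $\{A_n\},\{B_n\}$ of closed convex nonempty sets converging in the Attouch–Wets sense to $A$ and $B$ respectively, and every $a_0\in X$, the corresponding perturbed alternating projections sequences $\{a_n\}$ and $\{b_n\}$ converge in norm. *)

theory Defs
  imports "HOL-Analysis.Analysis"
begin

text \<open>Same definition as the library's
closest_point, but without the heine_borel restriction.\<close>
definition metric_proj :: "'a::real_inner set \<Rightarrow> 'a \<Rightarrow> 'a" where
  "metric_proj C x = (SOME y. y \<in> C \<and> (\<forall>z\<in>C. dist x y \<le> dist x z))"

definition displacement :: "'a::real_inner set \<Rightarrow> 'a set \<Rightarrow> 'a" where
  "displacement A B = metric_proj (closure {b - a | a b. a \<in> A \<and> b \<in> B}) 0"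

definition setdist_inf :: "'a::metric_space set \<Rightarrow> 'a set \<Rightarrow> real" where
  "setdist_inf S T = (INF s\<in>S. infdist s T)"

definition best_A :: "'a::metric_space set \<Rightarrow> 'a set \<Rightarrow> 'a set" where
  "best_A A B = {a \<in> A. infdist a B = setdist_inf A B}"

definition best_B :: "'a::metric_space set \<Rightarrow> 'a set \<Rightarrow> 'a set" where
  "best_B A B = {b \<in> B. infdist b A = setdist_inf A B}"

definition strongly_exposes :: "('a::real_normed_vector \<Rightarrow> real) \<Rightarrow> 'a set \<Rightarrow> 'a \<Rightarrow> bool" where
  "strongly_exposes f A a \<longleftrightarrow>
     bounded_linear f \<and> f \<noteq> (\<lambda>x. 0) \<and> a \<in> A \<and> (\<forall>x\<in>A. f x \<le> f a) \<and>
     (\<forall>xs. (\<forall>n. xs n \<in> A) \<longrightarrow> (\<lambda>n. f (xs n)) \<longlonglongrightarrow> f a \<longrightarrow> xs \<longlonglongrightarrow> a)"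

definition aw_excess :: "nat \<Rightarrow> 'a::real_normed_vector set \<Rightarrow> 'a set \<Rightarrow> real" where
  "aw_excess N C D = (if C \<inter> cball 0 (real N) = {} then 0
                      else (SUP c\<in>C \<inter> cball 0 (real N). infdist c D))"

definition aw_dist :: "nat \<Rightarrow> 'a::real_normed_vector set \<Rightarrow> 'a set \<Rightarrow> real" where
  "aw_dist N C D = max (aw_excess N C D) (aw_excess N D C)"

definition aw_converges :: "(nat \<Rightarrow> 'a::real_normed_vector set) \<Rightarrow> 'a set \<Rightarrow> bool" where
  "aw_converges Cs C \<longleftrightarrow> (\<forall>N. (\<lambda>j. aw_dist N (Cs j) C) \<longlonglongrightarrow> 0)"

text \<open>Perturbed alternating projections: a 0 = a0, b (n+1) = P_{B (n+1)} (a n),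
 a (n+1) = P_{A (n+1)} (b (n+1)).  (Indices 0 of the set sequences are unused.)\<close>
primrec alt_a :: "(nat \<Rightarrow> 'a::real_inner set) \<Rightarrow> (nat \<Rightarrow> 'a set) \<Rightarrow> 'a \<Rightarrow> nat \<Rightarrow> 'a" where
  "alt_a As Bs a0 0 = a0"
| "alt_a As Bs a0 (Suc n) = metric_proj (As (Suc n)) (metric_proj (Bs (Suc n)) (alt_a As Bs a0 n))"

definition alt_b :: "(nat \<Rightarrow> 'a::real_inner set) \<Rightarrow> (nat \<Rightarrow> 'a set) \<Rightarrow> 'a \<Rightarrow> nat \<Rightarrow> 'a" where
  "alt_b As Bs a0 n = metric_proj (Bs (Suc n)) (alt_a As Bs a0 n)"
  \<comment> \<open>alt_b As Bs a0 n is b_{n+1}\<close>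

definition stable_couple :: "'a::{real_inner,complete_space} set \<Rightarrow> 'a set \<Rightarrow> bool" where
  "stable_couple A B \<longleftrightarrow>
     best_A A B \<noteq> {} \<and> best_B A B \<noteq> {} \<and>
     (\<forall>As Bs a0. (\<forall>n. closed (As n) \<and> convex (As n) \<and> As n \<noteq> {}) \<longrightarrow>
                 (\<forall>n. closed (Bs n) \<and> convex (Bs n) \<and> Bs n \<noteq> {}) \<longrightarrow>
                 aw_converges As A \<longrightarrow> aw_converges Bs B \<longrightarrow>
                 convergent (alt_a As Bs a0) \<and> convergent (alt_b As Bs a0))"

end

theory Submission
  imports Defs
begin

lemma infdist_lessE:
  assumes "C \<noteq> {}" "infdist x C < t"
  shows "\<exists>c\<in>C. dist x c < t"
  using assms by (simp add: infdist_notempty cINF_less_iff)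

lemma sq_expand: "(norm (a - b))\<^sup>2 = (norm a)\<^sup>2 - 2 * inner a b + (norm (b::'a::real_inner))\<^sup>2"
  by (simp add: power2_norm_eq_inner inner_simps inner_commute)

lemma sq_expand_add: "(norm (a + b))\<^sup>2 = (norm a)\<^sup>2 + 2 * inner a b + (norm (b::'a::real_inner))\<^sup>2"
  by (simp add: power2_norm_eq_inner inner_simps inner_commute)

lemma proj_exists:
  fixes C :: "'a::{real_inner,complete_space} set"
  assumes "closed C" "convex C" "C \<noteq> {}"
  shows "\<exists>p\<in>C. \<forall>z\<in>C. dist x p \<le> dist x z"
proof -
  define d where "d = infdist x C"
  have d0: "0 \<le> d" by (simp add: d_def infdist_nonneg)
  have "\<forall>k::nat. \<exists>c\<in>C. dist x c < d + 1 / (real k + 1)"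
    using infdist_lessE[OF assms(3)] by (simp add: d_def)
  then obtain s where s: "\<And>k. s k \<in> C" "\<And>k. dist x (s k) < d + 1 / (real k + 1)"
    by metis
  have dle: "d \<le> dist x z" if "z \<in> C" for z
    using that by (simp add: d_def infdist_le)
  have key: "(norm (s m - s k))\<^sup>2 \<le> 4 * (2 * d + 1) / (real K + 1)"
    if "K \<le> k" "K \<le> m" for K k m
  proof -
    let ?u = "x - s k" and ?w = "x - s m"
    have par: "(norm (?u - ?w))\<^sup>2 + (norm (?u + ?w))\<^sup>2 = 2 * (norm ?u)\<^sup>2 + 2 * (norm ?w)\<^sup>2"
      by (simp add: power2_norm_eq_inner inner_simps inner_commute)
    have mid: "(1/2) *\<^sub>R s k + (1/2) *\<^sub>R s m \<in> C"
      using assms(2) s(1) by (simp add: convex_def)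
    have "?u + ?w = 2 *\<^sub>R (x - ((1/2) *\<^sub>R s k + (1/2) *\<^sub>R s m))"
      by (simp add: algebra_simps scaleR_2)
    then have "norm (?u + ?w) = 2 * dist x ((1/2) *\<^sub>R s k + (1/2) *\<^sub>R s m)"
      by (simp add: dist_norm)
    then have h1: "norm (?u + ?w) \<ge> 2 * d" using dle[OF mid] by simp
    have h1': "(norm (?u + ?w))\<^sup>2 \<ge> (2*d)\<^sup>2"
      using h1 d0 by (meson power_mono zero_le_mult_iff zero_le_numeral)
    have iK: "1 / (real k + 1) \<le> 1 / (real K + 1)" "1 / (real m + 1) \<le> 1 / (real K + 1)"
      using that by (auto simp: frac_le)
    have nu: "norm ?u \<le> d + 1 / (real K + 1)" using s(2)[of k] iK by (simp add: dist_norm)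
    have nw: "norm ?w \<le> d + 1 / (real K + 1)" using s(2)[of m] iK by (simp add: dist_norm)
    have "(norm ?u)\<^sup>2 \<le> (d + 1 / (real K + 1))\<^sup>2" using nu by (simp add: power_mono)
    moreover have "(norm ?w)\<^sup>2 \<le> (d + 1 / (real K + 1))\<^sup>2" using nw by (simp add: power_mono)
    ultimately have "(norm (?u - ?w))\<^sup>2 \<le> 4 * (d + 1 / (real K + 1))\<^sup>2 - 4 * d\<^sup>2"
      using par h1' by (simp add: power_mult_distrib)
    also have "\<dots> = 4 * (2 * d / (real K + 1) + 1 / (real K + 1) * (1 / (real K + 1)))"
      by (simp add: power2_eq_square algebra_simps)
    also have "\<dots> \<le> 4 * (2 * d / (real K + 1) + 1 / (real K + 1))"
      by (simp add: divide_le_eq_1 frac_le)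
    also have "\<dots> = 4 * (2 * d + 1) / (real K + 1)" by (simp add: field_simps)
    finally show ?thesis by (simp add: norm_minus_commute)
  qed
  have "Cauchy s"
  proof (rule metric_CauchyI)
    fix e :: real assume e: "0 < e"
    obtain K :: nat where K: "4 * (2 * d + 1) / e\<^sup>2 < real K" using reals_Archimedean2 by blast
    have "4 * (2 * d + 1) / (real K + 1) < e\<^sup>2"
      using K e d0 by (simp add: field_simps) (smt (verit) zero_less_power)
    then have "\<forall>m\<ge>K. \<forall>n\<ge>K. (dist (s m) (s n))\<^sup>2 < e\<^sup>2"
      using key by (smt (verit) dist_norm)
    then show "\<exists>M. \<forall>m\<ge>M. \<forall>n\<ge>M. dist (s m) (s n) < e"
      using e by (meson power_less_imp_less_base less_le_not_le zero_le_dist)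
  qed
  then obtain l where l: "s \<longlonglongrightarrow> l" using Cauchy_convergent_iff convergent_def by blast
  have lC: "l \<in> C" using closed_sequentially[OF assms(1)] s(1) l by blast
  have "(\<lambda>k. dist x (s k)) \<longlonglongrightarrow> dist x l" using l by (intro tendsto_intros)
  moreover have "(\<lambda>k. d + 1 / (real k + 1)) \<longlonglongrightarrow> d"
    using LIMSEQ_inverse_real_of_nat_add[of d] by (simp add: inverse_eq_divide add.commute)
  ultimately have "dist x l \<le> d" using s(2)
    by (intro LIMSEQ_le[of "\<lambda>k. dist x (s k)" _ "\<lambda>k. d + 1 / (real k + 1)"]) (auto intro: less_imp_le)
  then show ?thesis using lC dle by force
qed

context
  fixes C :: "'a::{real_inner,complete_space} set"
  assumes C: "closed C" "convex C" "C \<noteq> {}"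
begin

lemma proj_spec: "metric_proj C x \<in> C \<and> (\<forall>z\<in>C. dist x (metric_proj C x) \<le> dist x z)"
proof -
  obtain p where "p \<in> C \<and> (\<forall>z\<in>C. dist x p \<le> dist x z)" using proj_exists[OF C, of x] by blast
  then show ?thesis unfolding metric_proj_def
    by (rule someI[where P="\<lambda>y. y \<in> C \<and> (\<forall>z\<in>C. dist x y \<le> dist x z)"])
qed

lemma proj_in: "metric_proj C x \<in> C" using proj_spec by blast

lemma proj_min: "z \<in> C \<Longrightarrow> dist x (metric_proj C x) \<le> dist x z" using proj_spec by blast

lemma proj_vi:
  assumes c: "c \<in> C"
  shows "inner (x - metric_proj C x) (c - metric_proj C x) \<le> 0"
proof (rule ccontr)
  define p where "p = metric_proj C x"
  define w where "w = c - p"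
  define s where "s = inner (x - p) w"
  assume "\<not> ?thesis"
  then have s0: "s > 0" by (simp add: s_def p_def w_def)
  then have "w \<noteq> 0" by (auto simp: s_def)
  then have nw: "(norm w)\<^sup>2 > 0" by simp
  define t where "t = min 1 (s / (norm w)\<^sup>2)"
  have t0: "t > 0" "t \<le> 1" using s0 nw by (auto simp: t_def)
  have tw: "t * (norm w)\<^sup>2 \<le> s" using nw by (auto simp: t_def min_def field_simps)
  have y: "(1 - t) *\<^sub>R p + t *\<^sub>R c \<in> C"
    using C(2) c proj_in t0 by (simp add: p_def convex_def)
  have ye: "(1 - t) *\<^sub>R p + t *\<^sub>R c = p + t *\<^sub>R w" by (simp add: w_def algebra_simps)
  have "dist x p \<le> dist x (p + t *\<^sub>R w)" using proj_min[OF y] ye by (simp add: p_def)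
  then have "norm (x - p) \<le> norm ((x - p) - t *\<^sub>R w)"
    by (simp add: dist_norm diff_diff_eq)
  then have "(norm (x - p))\<^sup>2 \<le> (norm ((x - p) - t *\<^sub>R w))\<^sup>2"
    by (simp add: power_mono)
  also have "\<dots> = (norm (x - p))\<^sup>2 - 2 * (t * s) + t\<^sup>2 * (norm w)\<^sup>2"
    by (simp only: sq_expand inner_scaleR_right norm_scaleR power_mult_distrib power2_abs s_def)
  also have "t\<^sup>2 * (norm w)\<^sup>2 \<le> t * s"
    using mult_left_mono[OF tw, of t] t0 by (simp add: power2_eq_square mult.assoc)
  finally show False using t0 s0 by (smt (verit) mult_pos_pos)
qed

lemma proj_pyth:
  assumes c: "c \<in> C"
  shows "(norm (c - metric_proj C x))\<^sup>2 + (norm (x - metric_proj C x))\<^sup>2 \<le> (norm (x - c))\<^sup>2"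
proof -
  define p where "p = metric_proj C x"
  have "x - c = (x - p) - (c - p)" by simp
  then have "(norm (x - c))\<^sup>2 = (norm (x - p))\<^sup>2 - 2 * inner (x - p) (c - p) + (norm (c - p))\<^sup>2"
    by (metis sq_expand)
  then show ?thesis using proj_vi[OF c] by (simp add: p_def)
qed

lemma proj_firm:
  "(norm (metric_proj C x - metric_proj C y))\<^sup>2
     + (norm ((x - metric_proj C x) - (y - metric_proj C y)))\<^sup>2 \<le> (norm (x - y))\<^sup>2"
proof -
  define P where "P = metric_proj C x"
  define Q where "Q = metric_proj C y"
  define u where "u = P - Q"
  define w where "w = (x - P) - (y - Q)"
  have 1: "inner (x - P) (Q - P) \<le> 0"
    using proj_vi proj_in unfolding P_def Q_def by blast
  have 2: "inner (y - Q) (P - Q) \<le> 0"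
    using proj_vi proj_in unfolding P_def Q_def by blast
  have "Q - P = - (P - Q)" by simp
  then have h1b: "inner (x - P) (P - Q) \<ge> 0" using 1 by (metis inner_minus_right neg_le_0_iff_le)
  have "inner w u = inner (x - P) (P - Q) - inner (y - Q) (P - Q)"
    unfolding w_def u_def by (rule inner_diff_left)
  then have wu: "inner u w \<ge> 0" using h1b 2 by (simp add: inner_commute)
  have "x - y = u + w" by (simp add: u_def w_def)
  then have "(norm (x - y))\<^sup>2 = (norm u)\<^sup>2 + 2 * inner u w + (norm w)\<^sup>2"
    by (simp only: sq_expand_add)
  then show ?thesis using wu unfolding u_def w_def P_def Q_def by linarith
qed

lemma proj_nonexp: "norm (metric_proj C x - metric_proj C y) \<le> norm (x - y)"
proof -
  have "(norm (metric_proj C x - metric_proj C y))\<^sup>2 \<le> (norm (x - y))\<^sup>2"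
    using proj_firm[of x y] zero_le_power2[of "norm ((x - metric_proj C x) - (y - metric_proj C y))"]
    by linarith
  then show ?thesis by (rule power2_le_imp_le) simp
qed

lemma proj_unique:
  assumes "p \<in> C" "\<forall>z\<in>C. dist x p \<le> dist x z"
  shows "metric_proj C x = p"
proof -
  have "(norm (p - metric_proj C x))\<^sup>2 + (norm (x - metric_proj C x))\<^sup>2 \<le> (norm (x - p))\<^sup>2"
    using proj_pyth[OF assms(1)] .
  moreover have "norm (x - p) \<le> norm (x - metric_proj C x)"
    using assms proj_in by (auto simp: dist_norm)
  then have "(norm (x - p))\<^sup>2 \<le> (norm (x - metric_proj C x))\<^sup>2" by (simp add: power_mono)
  ultimately have "(norm (p - metric_proj C x))\<^sup>2 \<le> 0" by linarith
  then have "(norm (p - metric_proj C x))\<^sup>2 = 0" using zero_le_power2 by (rule antisym)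
  then show ?thesis by simp
qed

end

lemma excess_ge:
  fixes C D :: "'a::real_normed_vector set"
  assumes "D \<noteq> {}" "c \<in> C" "norm c \<le> real N"
  shows "infdist c D \<le> aw_excess N C D"
proof -
  have ne: "C \<inter> cball 0 (real N) \<noteq> {}" using assms by auto
  have "infdist y D \<le> infdist 0 D + real N" if "y \<in> C \<inter> cball 0 (real N)" for y
    using infdist_triangle[of y D 0] that by (simp add: dist_norm)
  then have bdd: "bdd_above ((\<lambda>c. infdist c D) ` (C \<inter> cball 0 (real N)))"
    by (intro bdd_aboveI2) blast
  have "infdist c D \<le> (SUP c\<in>C \<inter> cball 0 (real N). infdist c D)"
    using assms by (intro cSUP_upper[OF _ bdd]) auto
  then show ?thesis by (simp add: aw_excess_def ne)
qed

lemma aw_eventually_small: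
  assumes "aw_converges Cs C" "\<epsilon> > 0"
  shows "eventually (\<lambda>n. aw_dist N (Cs n) C < \<epsilon>) sequentially"
proof -
  have "(\<lambda>j. aw_dist N (Cs j) C) \<longlonglongrightarrow> 0" using assms(1) by (simp add: aw_converges_def)
  from order_tendstoD(2)[OF this assms(2)] show ?thesis .
qed

lemma aw_near:
  fixes C :: "'a::real_normed_vector set"
  assumes aw: "aw_converges Cs C" and ne: "\<forall>n. Cs n \<noteq> {}" and c: "c \<in> C" and e: "\<epsilon> > 0"
  shows "eventually (\<lambda>n. \<exists>c'\<in>Cs n. dist c c' < \<epsilon>) sequentially"
proof -
  define N where "N = nat \<lceil>norm c\<rceil>"
  have N: "norm c \<le> real N" unfolding N_def by (simp add: real_nat_ceiling_ge)
  show ?thesis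
    using aw_eventually_small[OF aw e, of N]
  proof eventually_elim
    case (elim n)
    have nen: "Cs n \<noteq> {}" using ne by simp
    have "infdist c (Cs n) \<le> aw_excess N C (Cs n)" using excess_ge[OF nen c N] .
    also have "\<dots> \<le> aw_dist N (Cs n) C" by (simp add: aw_dist_def)
    finally have "infdist c (Cs n) < \<epsilon>" using elim by linarith
    then show ?case using infdist_lessE[OF nen] by simp
  qed
qed

lemma aw_back:
  fixes C :: "'a::real_normed_vector set"
  assumes aw: "aw_converges Cs C" and ne: "C \<noteq> {}" and e: "\<epsilon> > 0"
  shows "eventually (\<lambda>n. \<forall>x\<in>Cs n. norm x \<le> R \<longrightarrow> (\<exists>z\<in>C. dist x z < \<epsilon>)) sequentially"
proof -
  define N where "N = nat \<lceil>R\<rceil>"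
  show ?thesis
    using aw_eventually_small[OF aw e, of N]
  proof eventually_elim
    case (elim n)
    show ?case
    proof (intro ballI impI)
      fix x assume x: "x \<in> Cs n" "norm x \<le> R"
      then have N: "norm x \<le> real N" unfolding N_def by (meson order_trans real_nat_ceiling_ge)
      have "infdist x C \<le> aw_excess N (Cs n) C" using excess_ge[OF ne x(1) N] .
      also have "\<dots> \<le> aw_dist N (Cs n) C" by (simp add: aw_dist_def)
      finally have "infdist x C < \<epsilon>" using elim by linarith
      then show "\<exists>z\<in>C. dist x z < \<epsilon>" using infdist_lessE[OF ne] by simp
    qed
  qed
qed

lemma aux16: "(k::real) > 0 \<Longrightarrow> 4 * (a / (16 * k)) * k = a / 4"
  by (simp add: field_simps)

lemma aux16': "(d::real) \<ge> 0 \<Longrightarrow> 4 * (a / (16 * (d + 1))) * (d + 1) = a / 4"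
  by (rule aux16) simp

lemma aw_proj:
  fixes C :: "'a::{real_inner,complete_space} set"
  assumes aw: "aw_converges Cs C" and C: "closed C" "convex C" "C \<noteq> {}"
    and Cs: "\<forall>n. closed (Cs n) \<and> convex (Cs n) \<and> Cs n \<noteq> {}"
  shows "(\<lambda>n. metric_proj (Cs n) x) \<longlonglongrightarrow> metric_proj C x"
proof (rule metric_LIMSEQ_I)
  fix \<delta> :: real assume \<delta>: "\<delta> > 0"
  define p where "p = metric_proj C x"
  define d where "d = norm (x - p)"
  have d0: "d \<ge> 0" by (simp add: d_def)
  define \<epsilon> where "\<epsilon> = min (min (\<delta>/2) 1) (\<delta>\<^sup>2 / (16 * (d + 1)))"
  have e0: "\<epsilon> > 0" using \<delta> d0 by (simp add: \<epsilon>_def)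
  have e1: "\<epsilon> \<le> \<delta>/2" "\<epsilon> \<le> 1" "\<epsilon> \<le> \<delta>\<^sup>2 / (16 * (d + 1))" unfolding \<epsilon>_def by linarith+
  have pC: "p \<in> C" using proj_in[OF C] by (simp add: p_def)
  have ev1: "eventually (\<lambda>n. \<exists>c'\<in>Cs n. dist p c' < \<epsilon>) sequentially"
    using aw_near[OF aw _ pC e0] Cs by simp
  have ev2: "eventually (\<lambda>n. \<forall>y\<in>Cs n. norm y \<le> norm x + d + \<epsilon> \<longrightarrow> (\<exists>z\<in>C. dist y z < \<epsilon>)) sequentially"
    using aw_back[OF aw C(3) e0] .
  show "\<exists>no. \<forall>n\<ge>no. dist (metric_proj (Cs n) x) (metric_proj C x) < \<delta>"
    unfolding eventually_sequentially[symmetric]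
    using ev1 ev2
  proof eventually_elim
    case (elim n)
    have Cn: "closed (Cs n)" "convex (Cs n)" "Cs n \<noteq> {}" using Cs by auto
    define pn where "pn = metric_proj (Cs n) x"
    obtain cn where cn: "cn \<in> Cs n" "dist p cn < \<epsilon>" using elim(1) by auto
    have "norm (x - pn) \<le> norm (x - cn)" using proj_min[OF Cn cn(1), of x] by (simp add: pn_def dist_norm)
    also have "\<dots> \<le> norm (x - p) + norm (p - cn)" by (rule norm_diff_triangle_le[of _ p]) simp_all
    finally have xpn: "norm (x - pn) \<le> d + \<epsilon>" using cn(2) by (simp add: d_def dist_norm)
    have "norm pn \<le> norm x + norm (x - pn)" using norm_triangle_ineq4[of x "x - pn"] by simp
    then have "norm pn \<le> norm x + d + \<epsilon>" using xpn by linarith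
    moreover have pnC: "pn \<in> Cs n" using proj_in[OF Cn] by (simp add: pn_def)
    ultimately obtain z where z: "z \<in> C" "dist pn z < \<epsilon>" using elim(2) by auto
    have xz: "norm (x - z) \<le> d + 2 * \<epsilon>"
      using norm_triangle_ineq[of "x - pn" "pn - z"] xpn z(2) by (simp add: dist_norm)
    have "(norm (z - p))\<^sup>2 + d\<^sup>2 \<le> (norm (x - z))\<^sup>2"
      using proj_pyth[OF C z(1), of x] by (simp add: p_def d_def)
    also have "\<dots> \<le> (d + 2 * \<epsilon>)\<^sup>2" using xz by (simp add: power_mono)
    finally have "(norm (z - p))\<^sup>2 \<le> 4 * \<epsilon> * d + 4 * \<epsilon> * \<epsilon>"
      by (simp add: power2_eq_square algebra_simps)
    also have "\<dots> \<le> 4 * \<epsilon> * (d + 1)" using e1 e0 d0 by (simp add: algebra_simps)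
    also have "\<dots> \<le> 4 * (\<delta>\<^sup>2 / (16 * (d + 1))) * (d + 1)"
      using mult_left_mono[OF mult_right_mono[OF e1(3), of "d+1"], of 4] d0 by (simp add: mult.assoc)
    also have "\<dots> = \<delta>\<^sup>2 / 4" using d0 by (simp only: aux16')
    also have "\<dots> = (\<delta>/2)\<^sup>2" by (simp add: power_divide)
    finally have "norm (z - p) \<le> \<delta>/2" by (rule power2_le_imp_le) (use \<delta> in simp)
    then have "dist z p \<le> \<delta>/2" by (simp add: dist_norm)
    then have "dist pn p < \<epsilon> + \<delta>/2" using z(2) dist_triangle[of pn p z] by linarith
    then have "dist pn p < \<delta>" using e1(1) by linarith
    then show ?case by (simp add: pn_def p_def)
  qed
qed

lemma aw_affine_bound:
  fixes C :: "'a::real_normed_vector set" and L :: "'a \<Rightarrow> real"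
  assumes aw: "aw_converges Cs C" and Cne: "C \<noteq> {}" and Cs: "\<forall>n. convex (Cs n) \<and> Cs n \<noteq> {}"
    and c: "c \<in> C" and L: "bounded_linear L" and Lb: "\<forall>x. \<bar>L x\<bar> \<le> norm x"
    and k: "0 \<le> k" "k \<le> 1" and H: "\<forall>z\<in>C. L z + k * norm (z - c) \<le> L c + \<mu>"
    and e: "\<epsilon> > 0" and rho: "\<rho> > 0"
  shows "eventually (\<lambda>n. \<exists>cn\<in>Cs n. dist c cn < \<epsilon> \<and>
           (\<forall>x\<in>Cs n. L x + k * norm (x - cn) \<le> L c + (\<mu> + 4 * \<epsilon>) * (1 + norm (x - cn) / \<rho>))) sequentially"
proof -
  have mu: "\<mu> \<ge> 0" using H c by force
  have neC: "\<forall>n. Cs n \<noteq> {}" using Cs by simp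
  have ev1: "eventually (\<lambda>n. \<exists>c'\<in>Cs n. dist c c' < \<epsilon>) sequentially"
    using aw_near[OF aw neC c e] .
  have ev2: "eventually (\<lambda>n. \<forall>x\<in>Cs n. norm x \<le> norm c + \<epsilon> + \<rho> \<longrightarrow> (\<exists>z\<in>C. dist x z < \<epsilon>)) sequentially"
    using aw_back[OF aw Cne e] .
  show ?thesis using ev1 ev2
  proof eventually_elim
    case (elim n)
    obtain cn where cn: "cn \<in> Cs n" "dist c cn < \<epsilon>" using elim(1) by auto
    have cvx: "convex (Cs n)" using Cs by simp
    have Ldiff: "L u - L w = L (u - w)" for u w using linear_diff[OF bounded_linear.linear[OF L]] by simp
    have Lle: "L u \<le> L w + norm (u - w)" for u w
      using Lb[rule_format, of "u - w"] Ldiff[of u w] by linarith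
    have near: "L y + k * norm (y - cn) \<le> L c + \<mu> + 3 * \<epsilon>"
      if y: "y \<in> Cs n" "norm (y - cn) \<le> \<rho>" for y
    proof -
      have "norm y \<le> norm cn + norm (y - cn)" using norm_triangle_ineq2[of y cn] by linarith
      moreover have "norm cn \<le> norm c + dist c cn" using norm_triangle_ineq2[of cn c] by (simp add: dist_norm norm_minus_commute)
      ultimately have "norm y \<le> norm c + \<epsilon> + \<rho>" using y(2) cn(2) by linarith
      then obtain z where z: "z \<in> C" "dist y z < \<epsilon>" using elim(2) y(1) by auto
      have "L y \<le> L z + \<epsilon>" using Lle[of y z] z(2) by (simp add: dist_norm)
      moreover have "norm (y - cn) \<le> norm (z - c) + norm (y - z) + norm (c - cn)"
        by (rule order_trans[OF norm_triangle_ineq[of "z - c" "(y - z) + (c - cn)", simplified]])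
           (smt (verit, best) norm_triangle_ineq)
      then have "norm (y - cn) \<le> norm (z - c) + 2 * \<epsilon>" using z(2) cn(2) by (simp add: dist_norm)
      then have "k * norm (y - cn) \<le> k * norm (z - c) + k * (2 * \<epsilon>)"
        using k(1) by (metis distrib_left mult_left_mono)
      moreover have "k * (2 * \<epsilon>) \<le> 2 * \<epsilon>" using k e by simp
      moreover have "L z + k * norm (z - c) \<le> L c + \<mu>" using H z(1) by blast
      ultimately show ?thesis by linarith
    qed
    show ?case
    proof (intro bexI[OF _ cn(1)] conjI ballI)
      show "dist c cn < \<epsilon>" by (rule cn(2))
      fix x assume x: "x \<in> Cs n"
      define m where "m = norm (x - cn)"
      have m0: "m \<ge> 0" by (simp add: m_def)
      have big: "L c + \<mu> + 4 * \<epsilon> \<le> L c + (\<mu> + 4 * \<epsilon>) * (1 + m / \<rho>)"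
        using mu e rho m0 by (simp add: algebra_simps)
      show "L x + k * norm (x - cn) \<le> L c + (\<mu> + 4 * \<epsilon>) * (1 + norm (x - cn) / \<rho>)"
      proof (cases "m \<le> \<rho>")
        case True
        then show ?thesis using near[OF x] big e unfolding m_def by linarith
      next
        case False
        then have mpos: "m > 0" using rho by linarith
        define t where "t = \<rho> / m"
        have t: "0 < t" "t \<le> 1" using False rho mpos by (auto simp: t_def)
        define y where "y = (1 - t) *\<^sub>R cn + t *\<^sub>R x"
        have yC: "y \<in> Cs n" using cvx cn(1) x t unfolding y_def convex_def by simp
        have yd: "y - cn = t *\<^sub>R (x - cn)" by (simp add: y_def algebra_simps)
        have ny: "norm (y - cn) = \<rho>" using yd t mpos rho by (simp add: m_def[symmetric] t_def)
        have "L y = (1 - t) * L cn + t * L x"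
          unfolding y_def linear_add[OF bounded_linear.linear[OF L]] linear_scale[OF bounded_linear.linear[OF L]]
          by simp
        then have Ly: "L y = L cn + t * (L x - L cn)" by (simp add: algebra_simps)
        have "L y + k * \<rho> \<le> L c + \<mu> + 3 * \<epsilon>" using near[OF yC] ny by simp
        moreover have "k * \<rho> = t * (k * m)" using mpos by (simp add: t_def)
        moreover have "L c \<le> L cn + \<epsilon>" using Lle[of c cn] cn(2) by (simp add: dist_norm)
        moreover have "t * (L x - L cn + k * m) = t * (L x - L cn) + t * (k * m)" by (rule distrib_left)
        ultimately have "t * (L x - L cn + k * m) \<le> \<mu> + 4 * \<epsilon>" using Ly by linarith
        then have "\<rho> * (L x - L cn + k * m) \<le> (\<mu> + 4 * \<epsilon>) * m"
          using mpos by (simp add: t_def field_simps)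
        then have "L x - L cn + k * m \<le> (\<mu> + 4 * \<epsilon>) * m / \<rho>"
          using rho by (simp add: pos_le_divide_eq mult.commute)
        moreover have "L cn \<le> L c + \<epsilon>" using Lle[of cn c] cn(2) by (simp add: dist_norm norm_minus_commute)
        moreover have "(\<mu> + 4 * \<epsilon>) * (1 + m / \<rho>) = (\<mu> + 4 * \<epsilon>) + (\<mu> + 4 * \<epsilon>) * m / \<rho>"
          by (simp add: algebra_simps add_divide_distrib)
        ultimately show ?thesis using mu e unfolding m_def by linarith
      qed
    qed
  qed
qed

lemma se_gap:
  assumes se: "strongly_exposes f A e" and r: "r > 0"
  shows "\<exists>\<eta>>0. \<forall>a\<in>A. norm (a - e) \<ge> r \<longrightarrow> f a \<le> f e - \<eta>"
proof (rule ccontr)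
  assume nt: "\<not> ?thesis"
  have "\<forall>k::nat. \<exists>a\<in>A. norm (a - e) \<ge> r \<and> f a > f e - 1 / (real k + 1)"
  proof
    fix k :: nat
    have pos: "1 / (real k + 1) > 0" by simp
    from nt have "\<not> (\<forall>a\<in>A. norm (a - e) \<ge> r \<longrightarrow> f a \<le> f e - 1 / (real k + 1))"
      using pos by blast
    then show "\<exists>a\<in>A. norm (a - e) \<ge> r \<and> f a > f e - 1 / (real k + 1)" by (auto simp: not_le)
  qed
  then obtain xs where xs: "\<And>k. xs k \<in> A" "\<And>k. norm (xs k - e) \<ge> r" "\<And>k. f (xs k) > f e - 1 / (real k + 1)"
    by metis
  have le: "f (xs k) \<le> f e" for k using se xs(1) by (simp add: strongly_exposes_def)
  have lim1: "(\<lambda>k. f e - 1 / (real k + 1)) \<longlonglongrightarrow> f e"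
    using LIMSEQ_inverse_real_of_nat_add_minus[of "f e"] by (simp add: inverse_eq_divide add.commute)
  have "(\<lambda>k. f (xs k)) \<longlonglongrightarrow> f e"
    by (rule real_tendsto_sandwich[OF _ _ lim1 tendsto_const]) (auto intro!: always_eventually less_imp_le xs(3) le)
  then have "xs \<longlonglongrightarrow> e" using se xs(1) by (simp add: strongly_exposes_def)
  then have "eventually (\<lambda>k. dist (xs k) e < r) sequentially" using r by (rule tendstoD)
  then obtain N where "\<forall>n\<ge>N. dist (xs n) e < r" unfolding eventually_sequentially by blast
  then have "dist (xs N) e < r" by simp
  then obtain k where "dist (xs k) e < r" by blast
  then show False using xs(2)[of k] by (simp add: dist_norm)
qed

lemma se_cone:
  assumes se: "strongly_exposes f A e" and cvx: "convex A" and r: "r > 0" and eta: "\<eta> > 0"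
    and gap: "\<forall>a\<in>A. norm (a - e) \<ge> r \<longrightarrow> f a \<le> f e - \<eta>"
  shows "\<forall>a\<in>A. f a + (\<eta> / r) * norm (a - e) \<le> f e + \<eta>"
proof
  fix a assume a: "a \<in> A"
  have bl: "bounded_linear f" and eA: "e \<in> A" and fle: "f a \<le> f e"
    using se a by (auto simp: strongly_exposes_def)
  define D where "D = norm (a - e)"
  show "f a + (\<eta> / r) * norm (a - e) \<le> f e + \<eta>"
  proof (cases "D < r")
    case True
    then have "(\<eta> / r) * D \<le> \<eta>" using r eta by (simp add: field_simps)
    then show ?thesis using fle by (simp add: D_def)
  next
    case False
    then have Dpos: "D > 0" using r by linarith
    define t where "t = r / D"
    have t: "0 < t" "t \<le> 1" using False r Dpos by (auto simp: t_def)
    define z where "z = (1 - t) *\<^sub>R e + t *\<^sub>R a"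
    have zA: "z \<in> A" using cvx eA a t unfolding z_def convex_def by simp
    have "z - e = t *\<^sub>R (a - e)" by (simp add: z_def algebra_simps)
    then have "norm (z - e) = r" using t Dpos r by (simp add: D_def[symmetric] t_def)
    then have fz: "f z \<le> f e - \<eta>" using gap zA by simp
    have "f z = (1 - t) * f e + t * f a"
      unfolding z_def linear_add[OF bounded_linear.linear[OF bl]] linear_scale[OF bounded_linear.linear[OF bl]]
      by simp
    then have "t * (f a - f e) \<le> - \<eta>" using fz by (simp add: algebra_simps)
    then have "r * (f a - f e) \<le> - \<eta> * D" using Dpos by (simp add: t_def field_simps)
    then have "f a - f e \<le> - (\<eta> / r) * D" using r by (simp add: field_simps)
    then show ?thesis using eta by (simp add: D_def)
  qed
qed

lemma step_real:
  fixes D BP G D' X Bv Fe \<kappa> \<eta> r e2 e3 :: real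
  assumes "0 \<le> D" "0 \<le> BP" "0 \<le> G" "BP\<^sup>2 + G\<^sup>2 \<le> D\<^sup>2" "D' \<le> BP + 2 * e3"
    "G \<ge> Bv - X - e3" "X \<le> Fe + 3 * \<eta> - (\<kappa> / 2) * D"
    "Bv \<ge> Fe - 4 * e2 * (1 + e2 + BP + e3)"
    "r > 0" "\<eta> > 0" "\<eta> \<le> r" "\<kappa> = \<eta> / r" "0 < e2" "e2 \<le> \<kappa> / 16" "e2 \<le> \<eta> / 24" "e2 \<le> 1"
    "0 < e3" "e3 \<le> \<eta> / 2" "e3 \<le> \<kappa>\<^sup>2 * r / 16" "e3 \<le> r / 2" "e3 \<le> 1"
  shows "D' \<le> max (D - \<kappa>\<^sup>2 * r / 8) (33 * r)"
proof -
  have k0: "\<kappa> > 0" "\<kappa> \<le> 1" using assms(9-12) by auto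
  have eta: "\<eta> = \<kappa> * r" using assms(9,12) by simp
  have "BP\<^sup>2 \<le> D\<^sup>2" using assms(4) by (smt (verit) zero_le_power2)
  then have BPD: "BP \<le> D" using assms(1) by (rule power2_le_imp_le)
  have "4 * e2 * (1 + e2 + BP + e3) = 4 * e2 * BP + 4 * e2 * (1 + e2 + e3)" by (simp add: algebra_simps)
  moreover have "4 * e2 * BP \<le> (\<kappa> / 4) * D"
  proof -
    have "4 * e2 \<le> \<kappa> / 4" using assms(14) by simp
    then show ?thesis using BPD assms(2) by (meson mult_mono order_trans assms(13) less_imp_le mult_nonneg_nonneg zero_le_numeral)
  qed
  moreover have "4 * e2 * (1 + e2 + e3) \<le> 12 * e2"
  proof -
    have "1 + e2 + e3 \<le> 3" using assms(16,21) by simp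
    then have "4 * e2 * (1 + e2 + e3) \<le> 4 * e2 * 3" using assms(13) by (intro mult_left_mono) auto
    then show ?thesis by simp
  qed
  ultimately have G1: "G \<ge> (\<kappa> / 4) * D - 4 * \<eta>"
    using assms(6,7,8,15,18) by (simp add: algebra_simps)
  show ?thesis
  proof (cases "D < 32 * r")
    case True
    then show ?thesis using assms(5,20) BPD by simp
  next
    case False
    have "(\<kappa> / 8) * D \<ge> 4 * \<eta>"
      using False eta k0 mult_left_mono[of "32 * r" D "\<kappa>"] by simp
    then have G2: "G \<ge> (\<kappa> / 8) * D" using G1 by simp
    have "((\<kappa> / 8) * D)\<^sup>2 \<le> G\<^sup>2"
      using G2 k0 assms(1) by (intro power_mono) auto
    then have "BP\<^sup>2 \<le> D\<^sup>2 - ((\<kappa> / 8) * D)\<^sup>2" using assms(4) by simp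
    also have "\<dots> \<le> ((1 - \<kappa>\<^sup>2 / 128) * D)\<^sup>2"
    proof -
      have "((1 - \<kappa>\<^sup>2 / 128) * D)\<^sup>2 = D\<^sup>2 - ((\<kappa> / 8) * D)\<^sup>2 + (\<kappa>\<^sup>2 / 128 * D)\<^sup>2"
        by (simp add: power2_eq_square algebra_simps)
      then show ?thesis using zero_le_power2[of "\<kappa>\<^sup>2 / 128 * D"] by linarith
    qed
    finally have sq: "BP\<^sup>2 \<le> ((1 - \<kappa>\<^sup>2 / 128) * D)\<^sup>2" .
    have k2: "\<kappa>\<^sup>2 \<le> 1" by (rule power_le_one) (use k0 in auto)
    have nn: "0 \<le> (1 - \<kappa>\<^sup>2 / 128) * D" using k2 assms(1) by (intro mult_nonneg_nonneg) auto
    have BP2: "BP \<le> (1 - \<kappa>\<^sup>2 / 128) * D" using power2_le_imp_le[OF sq nn] .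
    have id1: "(1 - \<kappa>\<^sup>2 / 128) * D = D - (\<kappa>\<^sup>2 / 128) * D" by (simp add: algebra_simps)
    have D1: "D' \<le> D - (\<kappa>\<^sup>2 / 128) * D + 2 * e3" using BP2 id1 assms(5) by linarith
    have m1: "(\<kappa>\<^sup>2 / 128) * (32 * r) \<le> (\<kappa>\<^sup>2 / 128) * D"
      using mult_left_mono[of "32 * r" D "\<kappa>\<^sup>2 / 128"] False by simp
    have id2: "(\<kappa>\<^sup>2 / 128) * (32 * r) = \<kappa>\<^sup>2 * r / 4" by simp
    have "D' \<le> D - \<kappa>\<^sup>2 * r / 8" using D1 m1 id2 assms(19) by linarith
    then show ?thesis by simp
  qed
qed

lemma descent_eventually:
  fixes D :: "nat \<Rightarrow> real"
  assumes g: "\<gamma> > 0" and ev: "eventually (\<lambda>n. D (Suc n) \<le> max (D n - \<gamma>) M) sequentially"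
    and pos: "\<And>n. D n \<ge> 0"
  shows "eventually (\<lambda>n. D n \<le> M) sequentially"
proof -
  obtain n0 where n0: "\<And>n. n \<ge> n0 \<Longrightarrow> D (Suc n) \<le> max (D n - \<gamma>) M"
    using ev by (auto simp: eventually_sequentially)
  have "\<exists>n1\<ge>n0. D n1 \<le> M"
  proof (rule ccontr)
    assume "\<not> ?thesis"
    then have gt: "\<And>n. n \<ge> n0 \<Longrightarrow> D n > M" by force
    have "D (n0 + k) \<le> D n0 - real k * \<gamma>" for k
    proof (induction k)
      case 0 then show ?case by simp
    next
      case (Suc k)
      have "D (Suc (n0 + k)) \<le> max (D (n0 + k) - \<gamma>) M" using n0 by simp
      moreover have "D (Suc (n0 + k)) > M" using gt by simp
      ultimately have "D (Suc (n0 + k)) \<le> D (n0 + k) - \<gamma>" by linarith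
      then show ?case using Suc by (simp add: algebra_simps)
    qed
    moreover obtain k :: nat where "real k > D n0 / \<gamma>" using reals_Archimedean2 by blast
    then have "real k * \<gamma> > D n0" using g by (simp add: field_simps)
    ultimately show False using pos[of "n0 + k"] by (smt (verit))
  qed
  then obtain n1 where n1: "n1 \<ge> n0" "D n1 \<le> M" by blast
  have "D (n1 + k) \<le> M" for k
  proof (induction k)
    case 0 then show ?case using n1 by simp
  next
    case (Suc k)
    have "D (Suc (n1 + k)) \<le> max (D (n1 + k) - \<gamma>) M" using n0 n1 by simp
    then show ?case using Suc g by simp
  qed
  then show ?thesis unfolding eventually_sequentially by (metis le_add_diff_inverse)
qed

lemma F1_conv:
  fixes f :: "'a::real_normed_vector \<Rightarrow> real"
  assumes r: "r > 0" "\<eta> > 0" "\<eta> \<le> r" "\<kappa> = \<eta> / r" and d: "dist e en < \<eta> / 4"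
    and h: "f y + \<kappa> * norm (y - en) \<le> f e + (\<eta> + 4 * (\<eta> / 4)) * (1 + norm (y - en) / (4 * r))"
  shows "f y \<le> f e + 3 * \<eta> - (\<kappa> / 2) * norm (y - e)"
proof -
  define m where "m = norm (y - en)"
  have k: "\<kappa> > 0" "\<kappa> \<le> 1" using r by auto
  have "(\<eta> + 4 * (\<eta> / 4)) * (1 + m / (4 * r)) = 2 * \<eta> + (\<kappa> / 2) * m"
    using r by (simp add: field_simps)
  then have 1: "f y \<le> f e + 2 * \<eta> - (\<kappa> / 2) * m" using h unfolding m_def[symmetric] by linarith
  have "norm (y - e) \<le> m + dist e en" unfolding m_def dist_norm
    using norm_triangle_ineq[of "y - en" "en - e"] by (simp add: norm_minus_commute)
  then have "norm (y - e) \<le> m + \<eta> / 4" using d by linarith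
  then have "(\<kappa> / 2) * norm (y - e) \<le> (\<kappa> / 2) * (m + \<eta> / 4)" using k by (intro mult_left_mono) auto
  moreover have "(\<kappa> / 2) * (\<eta> / 4) \<le> \<eta> / 8" using k r mult_right_mono[of \<kappa> 1 "\<eta>/8"] by simp
  moreover have "(\<kappa> / 2) * (m + \<eta> / 4) = (\<kappa> / 2) * m + (\<kappa> / 2) * (\<eta> / 4)" by (simp add: algebra_simps)
  ultimately show ?thesis using 1 r by linarith
qed

lemma F2_conv:
  fixes f :: "'a::real_normed_vector \<Rightarrow> real"
  assumes f: "bounded_linear f" and e2: "e2 > 0" and d: "dist (e + v) wn < e2"
    and h: "- f y + 0 * norm (y - wn) \<le> - f (e + v) + (0 + 4 * e2) * (1 + norm (y - wn) / 1)"
  shows "f y \<ge> f e + f v - 4 * e2 * (1 + e2 + norm (y - (e + v)))"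
proof -
  have fe: "f (e + v) = f e + f v" using linear_add[OF bounded_linear.linear[OF f]] by simp
  have "norm (y - wn) \<le> norm (y - (e + v)) + dist (e + v) wn" unfolding dist_norm
    using norm_triangle_ineq[of "y - (e + v)" "(e + v) - wn"] by simp
  then have "norm (y - wn) \<le> norm (y - (e + v)) + e2" using d by linarith
  then have "4 * e2 * (1 + norm (y - wn)) \<le> 4 * e2 * (1 + e2 + norm (y - (e + v)))"
    using e2 by (intro mult_left_mono) auto
  then show ?thesis using h fe by simp
qed

lemma one_step:
  fixes x e v :: "'a::{real_inner,complete_space}"
  assumes A2: "closed A2" "convex A2" "A2 \<noteq> {}" and B2: "closed B2" "convex B2" "B2 \<noteq> {}"
    and fb: "bounded_linear f" "\<forall>z. \<bar>f z\<bar> \<le> norm z"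
    and F1: "f x \<le> f e + 3 * \<eta> - (\<kappa> / 2) * norm (x - e)"
    and F2: "\<forall>y\<in>B2. f y \<ge> f e + f v - 4 * e2 * (1 + e2 + norm (y - (e + v)))"
    and F3: "norm (metric_proj B2 e - (e + v)) < e3" "norm (metric_proj A2 (e + v) - e) < e3"
    and par: "r > 0" "\<eta> > 0" "\<eta> \<le> r" "\<kappa> = \<eta> / r" "0 < e2" "e2 \<le> \<kappa> / 16" "e2 \<le> \<eta> / 24" "e2 \<le> 1"
      "0 < e3" "e3 \<le> \<eta> / 2" "e3 \<le> \<kappa>\<^sup>2 * r / 16" "e3 \<le> r / 2" "e3 \<le> 1"
  shows "norm (metric_proj A2 (metric_proj B2 x) - e) \<le> max (norm (x - e) - \<kappa>\<^sup>2 * r / 8) (33 * r)"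
proof -
  define b where "b = metric_proj B2 x"
  define a' where "a' = metric_proj A2 b"
  define p where "p = metric_proj B2 e"
  define q where "q = metric_proj A2 (e + v)"
  have bB: "b \<in> B2" using proj_in[OF B2] by (simp add: b_def)
  have 1: "(norm (b - p))\<^sup>2 + (norm ((x - b) - (e - p)))\<^sup>2 \<le> (norm (x - e))\<^sup>2"
    using proj_firm[OF B2, of x e] by (simp add: b_def p_def)
  have "norm (a' - q) \<le> norm (b - (e + v))" using proj_nonexp[OF A2] by (simp add: a'_def q_def)
  moreover have "norm (a' - e) \<le> norm (a' - q) + norm (q - e)"
    using norm_triangle_ineq[of "a' - q" "q - e"] by simp
  moreover have bev: "norm (b - (e + v)) \<le> norm (b - p) + norm (p - (e + v))"
    by (rule norm_diff_triangle_le[of _ p]) simp_all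
  ultimately have 2: "norm (a' - e) \<le> norm (b - p) + 2 * e3"
    using F3 by (simp add: p_def q_def)
  have "(x - b) - (e - p) = (x - b + v) + (p - (e + v))" by (simp add: algebra_simps)
  then have "norm ((x - b) - (e - p)) \<ge> norm (x - b + v) - norm (p - (e + v))"
    by (metis norm_diff_ineq diff_minus_eq_add norm_minus_cancel)
  moreover have "norm (x - b + v) \<ge> \<bar>f (x - b + v)\<bar>" using fb(2) by simp
  moreover have "f (x - b + v) = f x - f b + f v"
    using linear_add[OF bounded_linear.linear[OF fb(1)]] linear_diff[OF bounded_linear.linear[OF fb(1)]] by simp
  ultimately have 3: "norm ((x - b) - (e - p)) \<ge> (f b - f v) - f x - e3"
    using F3(1) by (simp add: p_def)
  have "f b \<ge> f e + f v - 4 * e2 * (1 + e2 + norm (b - (e + v)))" using F2 bB by blast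
  moreover have "4 * e2 * (1 + e2 + norm (b - (e + v))) \<le> 4 * e2 * (1 + e2 + norm (b - p) + e3)"
    using bev F3(1) par(5) by (intro mult_left_mono) (auto simp: p_def)
  ultimately have 5: "f b - f v \<ge> f e - 4 * e2 * (1 + e2 + norm (b - p) + e3)" by linarith
  show ?thesis
    using step_real[OF norm_ge_zero norm_ge_zero norm_ge_zero 1 2 3 F1 5 par]
    by (simp add: a'_def b_def)
qed

theorem corollary4p16:
  fixes A B :: "'a::{real_inner,complete_space} set"
    and f :: "'a \<Rightarrow> real" and e :: 'a
  assumes "closed A" "convex A" "A \<noteq> {}"
    and "closed B" "convex B" "B \<noteq> {}"
    and "e \<in> A" "e + displacement A B \<in> B"
    and "bounded_linear f" "onorm f = 1"
    and "\<forall>b\<in>B. f e \<le> f (b - displacement A B)"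
    and "\<forall>a\<in>A. f a \<le> f e"
    and "strongly_exposes f A e"
  shows "stable_couple A B"
proof -
  note Acl = assms(1-3) and Bcl = assms(4-6)
  define v where "v = displacement A B"
  define S where "S = {b - a | a b. a \<in> A \<and> b \<in> B}"
  have eA: "e \<in> A" by (rule assms(7))
  have evB: "e + v \<in> B" using assms(8) by (simp add: v_def)
  have fl: "bounded_linear f" by (rule assms(9))
  have fsep: "\<forall>b\<in>B. f e \<le> f (b - v)" using assms(11) by (simp add: v_def)
  have se: "strongly_exposes f A e" by (rule assms(13))
  have Scvx: "convex S"
    unfolding convex_def
  proof (intro ballI allI impI)
    fix x y and u w :: real
    assume xy: "x \<in> S" "y \<in> S" and uw: "0 \<le> u" "0 \<le> w" "u + w = 1"
    obtain a1 b1 where 1: "a1 \<in> A" "b1 \<in> B" "x = b1 - a1" using xy(1) by (auto simp: S_def)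
    obtain a2 b2 where 2: "a2 \<in> A" "b2 \<in> B" "y = b2 - a2" using xy(2) by (auto simp: S_def)
    have "u *\<^sub>R a1 + w *\<^sub>R a2 \<in> A" using assms(2) 1 2 uw unfolding convex_def by blast
    moreover have "u *\<^sub>R b1 + w *\<^sub>R b2 \<in> B" using assms(5) 1 2 uw unfolding convex_def by blast
    moreover have "u *\<^sub>R x + w *\<^sub>R y = (u *\<^sub>R b1 + w *\<^sub>R b2) - (u *\<^sub>R a1 + w *\<^sub>R a2)"
      unfolding 1(3) 2(3) by (simp add: algebra_simps)
    ultimately show "u *\<^sub>R x + w *\<^sub>R y \<in> S" unfolding S_def by blast
  qed
  have Sne: "S \<noteq> {}" using eA evB unfolding S_def by blast
  have cS: "closed (closure S)" "convex (closure S)" "closure S \<noteq> {}"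
    using Scvx Sne by (auto simp: convex_closure)
  have vdef: "v = metric_proj (closure S) 0" by (simp add: v_def displacement_def S_def)
  have vmin: "norm v \<le> norm (b - a)" if "a \<in> A" "b \<in> B" for a b
  proof -
    have "b - a \<in> S" unfolding S_def using that by auto
    then have "b - a \<in> closure S" using closure_subset by auto
    then show ?thesis using proj_min[OF cS, of "b - a" 0] by (simp add: vdef[symmetric])
  qed
  have PBe: "metric_proj B e = e + v"
  proof (rule proj_unique[OF Bcl evB], intro ballI)
    fix z assume "z \<in> B"
    then have "norm v \<le> norm (z - e)" using vmin[OF eA] by simp
    then show "dist e (e + v) \<le> dist e z" by (simp add: dist_norm norm_minus_commute)
  qed
  have PAe: "metric_proj A (e + v) = e"
  proof (rule proj_unique[OF Acl eA], intro ballI)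
    fix z assume "z \<in> A"
    then have "norm v \<le> norm ((e + v) - z)" using vmin[OF _ evB] by simp
    then show "dist (e + v) e \<le> dist (e + v) z" by (simp add: dist_norm)
  qed
  have infA: "infdist a B \<ge> norm v" if "a \<in> A" for a
    unfolding infdist_notempty[OF assms(6)]
    by (rule cINF_greatest) (use assms(6) vmin[OF that] in \<open>auto simp: dist_norm norm_minus_commute\<close>)
  have infB: "infdist b A \<ge> norm v" if "b \<in> B" for b
    unfolding infdist_notempty[OF assms(3)]
    by (rule cINF_greatest) (use assms(3) vmin[OF _ that] in \<open>auto simp: dist_norm\<close>)
  have ie: "infdist e B = norm v"
    using infA[OF eA] infdist_le[OF evB, of e] by (simp add: dist_norm)
  have iev: "infdist (e + v) A = norm v"
    using infB[OF evB] infdist_le[OF eA, of "e + v"] by (simp add: dist_norm)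
  have sd: "setdist_inf A B = norm v"
    unfolding setdist_inf_def
  proof (rule antisym)
    show "(INF a\<in>A. infdist a B) \<le> norm v"
    proof -
      have bdd: "bdd_below ((\<lambda>a. infdist a B) ` A)" by (rule bdd_belowI2[where m=0]) (simp add: infdist_nonneg)
      show ?thesis using cINF_lower[OF bdd eA] ie by simp
    qed
    show "norm v \<le> (INF a\<in>A. infdist a B)"
      by (rule cINF_greatest) (use assms(3) infA in auto)
  qed
  have bestA: "best_A A B \<noteq> {}" using eA ie sd unfolding best_A_def by auto
  have bestB: "best_B A B \<noteq> {}" using evB iev sd unfolding best_B_def by auto
  have fb: "\<forall>z. \<bar>f z\<bar> \<le> norm z" using onorm[OF fl] assms(10) by simp
  show ?thesis
    unfolding stable_couple_def
  proof (intro conjI allI impI bestA bestB)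
    fix As Bs a0
    assume HA: "\<forall>n. closed (As n) \<and> convex (As n) \<and> As n \<noteq> {}"
      and HB: "\<forall>n. closed (Bs n) \<and> convex (Bs n) \<and> Bs n \<noteq> {}"
      and awA: "aw_converges As A" and awB: "aw_converges Bs B"
    define a where "a = alt_a As Bs a0"
    have aSuc: "a (Suc n) = metric_proj (As (Suc n)) (metric_proj (Bs (Suc n)) (a n))" for n
      by (simp add: a_def)
    have aIn: "a n \<in> As n" if n1: "n \<ge> 1" for n
    proof -
      obtain m where "n = Suc m" using n1 by (cases n) auto
      then show ?thesis using aSuc[of m] proj_in[of "As (Suc m)"] HA by simp
    qed
    have pB: "(\<lambda>n. metric_proj (Bs n) e) \<longlonglongrightarrow> e + v"
      using aw_proj[OF awB Bcl HB, of e] PBe by simp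
    have qA: "(\<lambda>n. metric_proj (As n) (e + v)) \<longlonglongrightarrow> e"
      using aw_proj[OF awA Acl HA, of "e + v"] PAe by simp
    have small: "eventually (\<lambda>n. norm (a n - e) \<le> \<delta>) sequentially" if \<delta>: "\<delta> > 0" for \<delta>
    proof -
      define r where "r = \<delta> / 33"
      have r: "r > 0" using \<delta> by (simp add: r_def)
      obtain \<eta>0 where \<eta>0: "\<eta>0 > 0" "\<forall>a\<in>A. norm (a - e) \<ge> r \<longrightarrow> f a \<le> f e - \<eta>0"
        using se_gap[OF se r] by blast
      define \<eta> where "\<eta> = min \<eta>0 r"
      have \<eta>: "\<eta> > 0" "\<eta> \<le> r" using \<eta>0 r by (auto simp: \<eta>_def)
      have gap: "\<forall>a\<in>A. norm (a - e) \<ge> r \<longrightarrow> f a \<le> f e - \<eta>"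
      proof (intro ballI impI)
        fix z assume "z \<in> A" "norm (z - e) \<ge> r"
        then have "f z \<le> f e - \<eta>0" using \<eta>0(2) by simp
        moreover have "\<eta> \<le> \<eta>0" by (simp add: \<eta>_def)
        ultimately show "f z \<le> f e - \<eta>" by linarith
      qed
      define \<kappa> where "\<kappa> = \<eta> / r"
      have k: "\<kappa> > 0" "\<kappa> \<le> 1" using \<eta> r by (auto simp: \<kappa>_def)
      have cone: "\<forall>z\<in>A. f z + \<kappa> * norm (z - e) \<le> f e + \<eta>"
        using se_cone[OF se assms(2) r \<eta>(1) gap] by (simp add: \<kappa>_def)
      define e2 where "e2 = min (min (\<kappa> / 16) (\<eta> / 24)) 1"
      have e2: "0 < e2" "e2 \<le> \<kappa> / 16" "e2 \<le> \<eta> / 24" "e2 \<le> 1"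
        using k \<eta> by (auto simp: e2_def)
      define e3 where "e3 = min (min (\<eta> / 2) (\<kappa>\<^sup>2 * r / 16)) (min (r / 2) 1)"
      have e3: "0 < e3" "e3 \<le> \<eta> / 2" "e3 \<le> \<kappa>\<^sup>2 * r / 16" "e3 \<le> r / 2" "e3 \<le> 1"
        using k \<eta> r by (auto simp: e3_def)
      have HA': "\<forall>n. convex (As n) \<and> As n \<noteq> {}" using HA by simp
      have HB': "\<forall>n. convex (Bs n) \<and> Bs n \<noteq> {}" using HB by simp
      have evF1: "eventually (\<lambda>n. \<exists>cn\<in>As n. dist e cn < \<eta> / 4 \<and>
           (\<forall>x\<in>As n. f x + \<kappa> * norm (x - cn) \<le> f e + (\<eta> + 4 * (\<eta> / 4)) * (1 + norm (x - cn) / (4 * r)))) sequentially"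
        by (rule aw_affine_bound[OF awA assms(3) HA' eA fl fb]) (use k cone \<eta> r in auto)
      have fneg: "bounded_linear (\<lambda>x. - f x)" using bounded_linear_minus[OF fl] .
      have fbn: "\<forall>z. \<bar>- f z\<bar> \<le> norm z" using fb by simp
      have Hneg: "\<forall>z\<in>B. - f z + 0 * norm (z - (e + v)) \<le> - f (e + v) + 0"
      proof
        fix z assume "z \<in> B"
        then have "f e \<le> f (z - v)" using fsep by blast
        then show "- f z + 0 * norm (z - (e + v)) \<le> - f (e + v) + 0"
          using linear_add[OF bounded_linear.linear[OF fl]] linear_diff[OF bounded_linear.linear[OF fl]] by simp
      qed
      have evF2: "eventually (\<lambda>n. \<exists>cn\<in>Bs n. dist (e + v) cn < e2 \<and>
           (\<forall>x\<in>Bs n. - f x + 0 * norm (x - cn) \<le> - f (e + v) + (0 + 4 * e2) * (1 + norm (x - cn) / 1))) sequentially"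
        by (rule aw_affine_bound[OF awB assms(6) HB' evB fneg fbn _ _ Hneg e2(1)]) auto
      have evF3: "eventually (\<lambda>n. norm (metric_proj (Bs n) e - (e + v)) < e3
                               \<and> norm (metric_proj (As n) (e + v) - e) < e3) sequentially"
        using tendstoD[OF pB e3(1)] tendstoD[OF qA e3(1)]
        by eventually_elim (simp add: dist_norm)
      have evstep: "eventually (\<lambda>n. norm (a (Suc n) - e) \<le> max (norm (a n - e) - \<kappa>\<^sup>2 * r / 8) (33 * r)) sequentially"
      proof -
        have evS: "eventually (\<lambda>n. (\<exists>cn\<in>Bs (Suc n). dist (e + v) cn < e2 \<and>
           (\<forall>x\<in>Bs (Suc n). - f x + 0 * norm (x - cn) \<le> - f (e + v) + (0 + 4 * e2) * (1 + norm (x - cn) / 1)))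
           \<and> norm (metric_proj (Bs (Suc n)) e - (e + v)) < e3
           \<and> norm (metric_proj (As (Suc n)) (e + v) - e) < e3) sequentially"
          using eventually_conj[OF evF2 evF3] eventually_sequentially_Suc[of "\<lambda>n. (\<exists>cn\<in>Bs n. dist (e + v) cn < e2 \<and>
           (\<forall>x\<in>Bs n. - f x + 0 * norm (x - cn) \<le> - f (e + v) + (0 + 4 * e2) * (1 + norm (x - cn) / 1)))
           \<and> norm (metric_proj (Bs n) e - (e + v)) < e3
           \<and> norm (metric_proj (As n) (e + v) - e) < e3"] by simp
        show ?thesis
          using evF1 evS eventually_ge_at_top[of "1::nat"]
        proof eventually_elim
          case (elim n)
          obtain cn where cn: "cn \<in> As n" "dist e cn < \<eta> / 4"
            "\<forall>x\<in>As n. f x + \<kappa> * norm (x - cn) \<le> f e + (\<eta> + 4 * (\<eta> / 4)) * (1 + norm (x - cn) / (4 * r))"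
            using elim(1) by blast
          obtain wn where wn: "wn \<in> Bs (Suc n)" "dist (e + v) wn < e2"
            "\<forall>x\<in>Bs (Suc n). - f x + 0 * norm (x - wn) \<le> - f (e + v) + (0 + 4 * e2) * (1 + norm (x - wn) / 1)"
            using elim(2) by blast
          have xin: "a n \<in> As n" using aIn elim(3) by simp
          have F1: "f (a n) \<le> f e + 3 * \<eta> - (\<kappa> / 2) * norm (a n - e)"
            using F1_conv[OF r \<eta>(1) \<eta>(2) \<kappa>_def cn(2)] cn(3) xin by blast
          have F2: "\<forall>y\<in>Bs (Suc n). f y \<ge> f e + f v - 4 * e2 * (1 + e2 + norm (y - (e + v)))"
            using F2_conv[OF fl e2(1) wn(2)] wn(3) by blast
          have A2: "closed (As (Suc n))" "convex (As (Suc n))" "As (Suc n) \<noteq> {}" using HA by auto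
          have B2: "closed (Bs (Suc n))" "convex (Bs (Suc n))" "Bs (Suc n) \<noteq> {}" using HB by auto
          show ?case
            using one_step[OF A2 B2 fl fb F1 F2 _ _ r \<eta>(1) \<eta>(2) \<kappa>_def e2 e3] elim(2)
            by (simp add: aSuc)
        qed
      qed
      have "eventually (\<lambda>n. norm (a n - e) \<le> 33 * r) sequentially"
        by (rule descent_eventually[OF _ evstep]) (use k r in auto)
      then show ?thesis by (simp add: r_def)
    qed
    have conv_a: "a \<longlonglongrightarrow> e"
    proof (rule metric_LIMSEQ_I)
      fix \<epsilon> :: real assume "\<epsilon> > 0"
      then have "eventually (\<lambda>n. norm (a n - e) \<le> \<epsilon> / 2) sequentially" using small[of "\<epsilon> / 2"] by simp
      then obtain N where N: "\<forall>n\<ge>N. norm (a n - e) \<le> \<epsilon> / 2" unfolding eventually_sequentially by blast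
      show "\<exists>no. \<forall>n\<ge>no. dist (a n) e < \<epsilon>"
      proof (intro exI allI impI)
        fix n assume "n \<ge> N"
        then have "norm (a n - e) \<le> \<epsilon> / 2" using N by simp
        then show "dist (a n) e < \<epsilon>" using \<open>\<epsilon> > 0\<close> by (simp add: dist_norm)
      qed
    qed
    have conv_b: "alt_b As Bs a0 \<longlonglongrightarrow> e + v"
    proof -
      have bdef: "alt_b As Bs a0 n = metric_proj (Bs (Suc n)) (a n)" for n by (simp add: alt_b_def a_def)
      have le: "norm (alt_b As Bs a0 n - (e + v)) \<le> norm (a n - e) + norm (metric_proj (Bs (Suc n)) e - (e + v))" for n
      proof -
        have B2: "closed (Bs (Suc n))" "convex (Bs (Suc n))" "Bs (Suc n) \<noteq> {}" using HB by auto
        have "norm (metric_proj (Bs (Suc n)) (a n) - metric_proj (Bs (Suc n)) e) \<le> norm (a n - e)"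
          by (rule proj_nonexp[OF B2])
        moreover have "norm (metric_proj (Bs (Suc n)) (a n) - (e + v)) \<le>
            norm (metric_proj (Bs (Suc n)) (a n) - metric_proj (Bs (Suc n)) e) + norm (metric_proj (Bs (Suc n)) e - (e + v))"
          by (rule norm_diff_triangle_le[of _ "metric_proj (Bs (Suc n)) e"]) simp_all
        ultimately show ?thesis unfolding bdef by linarith
      qed
      have t1: "(\<lambda>n. norm (a n - e)) \<longlonglongrightarrow> 0"
        using tendsto_norm_zero[OF LIM_zero[OF conv_a]] .
      have t2: "(\<lambda>n. norm (metric_proj (Bs (Suc n)) e - (e + v))) \<longlonglongrightarrow> 0"
        using tendsto_norm_zero[OF LIM_zero[OF LIMSEQ_Suc[OF pB]]] .
      have t3: "(\<lambda>n. norm (a n - e) + norm (metric_proj (Bs (Suc n)) e - (e + v))) \<longlonglongrightarrow> 0"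
        using tendsto_add[OF t1 t2] by simp
      have "(\<lambda>n. alt_b As Bs a0 n - (e + v)) \<longlonglongrightarrow> 0"
        by (rule Lim_null_comparison[OF always_eventually t3]) (use le in blast)
      then show ?thesis by (rule LIM_zero_cancel)
    qed
    show "convergent (alt_a As Bs a0)" using conv_a unfolding a_def convergent_def by blast
    show "convergent (alt_b As Bs a0)" using conv_b unfolding convergent_def by blast
  qed
qed

end
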